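(* Let $X$ be a set, $A$ a commutative unital $\mathbb{R}$-algebra, $\bar{}\colon A\to\mathbb{R}^X$ a unital $\mathbb{R}$-algebra homomorphism, and $Q\subseteq A$ an archimedean quadratic module. Let $Y$, $m\colon X\to Y$, $K_{Q,X}$, $K_{Q,Y}$ be as in the context. (1) If $m(K_{Q,X})=K_{Q,Y}$, then for every $f\in A$: if $\bar f(x)>0$ for all $x\in K_{Q,X}$, then $f\in Q$. (2) If $\overline{m(K_{Q,X})}=K_{Q,Y}$ (closure taken in $Y$), then for every $f\in A$: if $\bar f(x)\ge 0$ for all $x\in K_{Q,X}$, then $f+\epsilon\in Q$ for every real $\epsilon>0$.
   Context: A quadratic module of $A$ is a subset $Q\subseteq A$ with $Q+Q\subseteq Q$, $a^2Q\subseteq Q$ for all $a\in A$, and $1\in Q$. $Q$ is archimedean if for every $a\in A$ there is an integer $n\ge1$ with $n+a\in Q$. $K_{Q,X}:=\{x\in X\mid \bar g(x)\ge 0\ \forall g\in Q\}$. $Y$ denotes the set of all unital $\mathbb{R}$-algebra homomorphisms $y\colon A\to\mathbb{R}$; for $a\in A$, $\hat a\colon Y\to\mathbb{R}$ is $\hat a(y)=y(a)$, and $Y$ carries the weakest topology making all $\hat a$ continuous. $K_{Q,Y}:=\{y\in Y\mid \hat g(y)\ge0\ \forall g\in Q\}$. The map $m\colon X\to Y$ is $m(x)(a)=\bar a(x)$. *)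

theory Defs
  imports "HOL-Analysis.Analysis"
begin

text \<open>The set X is a carrier set of type 'x set;
 elements of R^X are represented by functions 'x \<Rightarrow> real (only values on X matter).\<close>

definition quadratic_module :: "('a::{comm_ring_1,real_algebra_1}) set \<Rightarrow> bool" where
  "quadratic_module Q \<longleftrightarrow>
     (\<forall>p\<in>Q. \<forall>q\<in>Q. p + q \<in> Q) \<and> (\<forall>a. \<forall>q\<in>Q. a^2 * q \<in> Q) \<and> 1 \<in> Q"

definition archimedean_qm :: "('a::{comm_ring_1,real_algebra_1}) set \<Rightarrow> bool" where
  "archimedean_qm Q \<longleftrightarrow> (\<forall>a. \<exists>n::nat. n \<ge> 1 \<and> of_nat n + a \<in> Q)"

definition alg_hom_to_funs :: "'x set \<Rightarrow> (('a::{comm_ring_1,real_algebra_1}) \<Rightarrow> 'x \<Rightarrow> real) \<Rightarrow> bool" where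
  "alg_hom_to_funs X bar \<longleftrightarrow> (\<forall>x\<in>X.
      (\<forall>a b. bar (a + b) x = bar a x + bar b x) \<and>
      (\<forall>a b. bar (a * b) x = bar a x * bar b x) \<and>
      (\<forall>r a. bar (r *\<^sub>R a) x = r * bar a x) \<and>
      bar 1 x = 1)"

text \<open>Y: all unital R-algebra homomorphisms A \<rightarrow> R; as a subset of 'a \<Rightarrow> real it carries
 the product topology, i.e. the weakest topology making all evaluations continuous.\<close>
definition char_space :: "(('a::{comm_ring_1,real_algebra_1}) \<Rightarrow> real) set" where
  "char_space = {y. (\<forall>a b. y (a + b) = y a + y b) \<and> (\<forall>a b. y (a * b) = y a * y b) \<and>
                    (\<forall>r a. y (r *\<^sub>R a) = r * y a) \<and> y 1 = 1}"

definition K_X :: "('a::{comm_ring_1,real_algebra_1}) set \<Rightarrow> 'x set \<Rightarrow> ('a \<Rightarrow> 'x \<Rightarrow> real) \<Rightarrow> 'x set" where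
  "K_X Q X bar = {x\<in>X. \<forall>g\<in>Q. bar g x \<ge> 0}"

definition K_Y :: "('a::{comm_ring_1,real_algebra_1}) set \<Rightarrow> ('a \<Rightarrow> real) set" where
  "K_Y Q = {y\<in>char_space. \<forall>g\<in>Q. y g \<ge> 0}"

definition evmap :: "(('a::{comm_ring_1,real_algebra_1}) \<Rightarrow> 'x \<Rightarrow> real) \<Rightarrow> 'x \<Rightarrow> ('a \<Rightarrow> real)" where
  "evmap bar x = (\<lambda>a. bar a x)"

end

theory Submission
  imports Defs
begin

locale qmod =
  fixes Q :: "'a::{comm_ring_1,real_algebra_1} set"
  assumes qm: "quadratic_module Q"
begin

lemma add: "p \<in> Q \<Longrightarrow> q \<in> Q \<Longrightarrow> p + q \<in> Q"
  using qm by (auto simp: quadratic_module_def)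
lemma sqmul: "q \<in> Q \<Longrightarrow> a^2 * q \<in> Q"
  using qm by (auto simp: quadratic_module_def)
lemma one: "1 \<in> Q"
  using qm by (auto simp: quadratic_module_def)
lemma sq: "a^2 \<in> Q"
  using sqmul[OF one, of a] by simp
lemma zero: "0 \<in> Q"
  using sq[of 0] by simp
lemma scal: "r \<ge> 0 \<Longrightarrow> q \<in> Q \<Longrightarrow> of_real r * q \<in> Q"
proof -
  assume r: "r \<ge> 0" and q: "q \<in> Q"
  have "of_real r * q = (of_real (sqrt r))^2 * q"
    using r by (simp flip: of_real_power)
  then show ?thesis using sqmul[OF q] by simp
qed
lemma ofr: "r \<ge> 0 \<Longrightarrow> of_real r \<in> Q"
  using scal[OF _ one] by simp
lemma scaleR: "r \<ge> 0 \<Longrightarrow> q \<in> Q \<Longrightarrow> r *\<^sub>R q \<in> Q"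
  by (simp add: scaleR_conv_of_real scal)
lemma addr: "q \<in> Q \<Longrightarrow> r \<ge> 0 \<Longrightarrow> q + of_real r \<in> Q"
  using add ofr by blast

lemma diffsq:
  assumes d: "d > 0" and p: "of_real d + b \<in> Q" and m: "of_real d - b \<in> Q"
  shows "of_real (d^2) - b^2 \<in> Q"
proof -
  have "(of_real d - b)^2 * (of_real d + b) + (of_real d + b)^2 * (of_real d - b) \<in> Q"
    using add sqmul p m by blast
  moreover have "(of_real d - b)^2 * (of_real d + b) + (of_real d + b)^2 * (of_real d - b)
      = of_real (2*d) * (of_real (d^2) - b^2)"
    by (simp add: algebra_simps power2_eq_square)
  ultimately have "of_real (inverse (2*d)) * (of_real (2*d) * (of_real (d^2) - b^2)) \<in> Q"
    using scal d by simp
  also have "of_real (inverse (2*d)) * (of_real (2*d) * (of_real (d^2) - b^2)) = of_real (d^2) - b^2"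
    using d by (simp add: mult.assoc[symmetric] flip: of_real_mult)
  finally show ?thesis .
qed

lemma proper_real: "-1 \<notin> Q \<Longrightarrow> of_real c \<in> Q \<Longrightarrow> c \<ge> 0"
proof (rule ccontr)
  assume n: "-1 \<notin> Q" and c: "of_real c \<in> Q" and "\<not> c \<ge> 0"
  have eq: "of_real (-1/c) * of_real c = (-1::'a)" using \<open>\<not> c \<ge> 0\<close> by (simp flip: of_real_mult)
  have "of_real (-1/c) * of_real c \<in> Q" by (rule scal) (use c \<open>\<not> c \<ge> 0\<close> in auto)
  then have "(-1::'a) \<in> Q" unfolding eq .
  then show False using n by simp
qed

end

definition Sig :: "('a::{comm_ring_1,real_algebra_1}) set" where
  "Sig = {s. \<forall>M. quadratic_module M \<longrightarrow> (\<forall>n\<in>M. s*n \<in> M)}"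

lemma Sig_mul: "quadratic_module M \<Longrightarrow> s \<in> Sig \<Longrightarrow> n \<in> M \<Longrightarrow> s*n \<in> M"
  by (auto simp: Sig_def)
lemma Sig_sq: "a^2 \<in> Sig"
  by (auto simp: Sig_def quadratic_module_def)
lemma Sig_add: "s \<in> Sig \<Longrightarrow> t \<in> Sig \<Longrightarrow> s + t \<in> Sig"
  by (auto simp: Sig_def quadratic_module_def distrib_right)
lemma Sig_sqmul: "s \<in> Sig \<Longrightarrow> a^2 * s \<in> Sig"
  by (auto simp: Sig_def quadratic_module_def mult.assoc)
lemma Sig_in: "quadratic_module M \<Longrightarrow> s \<in> Sig \<Longrightarrow> s \<in> M"
  using Sig_mul[of M s 1] by (auto simp: quadratic_module_def)

lemma ext_qm:
  assumes "quadratic_module N"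
  shows "quadratic_module {n + s * a | n s. n \<in> N \<and> s \<in> Sig}"
  unfolding quadratic_module_def
proof (intro conjI ballI allI)
  interpret qmod N by (rule qmod.intro) (rule assms)
  show "1 \<in> {n + s * a |n s. n \<in> N \<and> s \<in> Sig}"
    using one Sig_sq[of 0] by (intro CollectI exI[of _ 1] exI[of _ 0]) simp
  fix p q assume "p \<in> {n + s * a |n s. n \<in> N \<and> s \<in> Sig}" "q \<in> {n + s * a |n s. n \<in> N \<and> s \<in> Sig}"
  then obtain n1 s1 n2 s2 where "p = n1 + s1*a" "q = n2 + s2*a" "n1 \<in> N" "n2 \<in> N" "s1 \<in> Sig" "s2 \<in> Sig"
    by blast
  then show "p + q \<in> {n + s * a |n s. n \<in> N \<and> s \<in> Sig}"
    by (intro CollectI exI[of _ "n1+n2"] exI[of _ "s1+s2"]) (auto simp: add Sig_add algebra_simps)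
next
  interpret qmod N by (rule qmod.intro) (rule assms)
  fix b q assume "q \<in> {n + s * a |n s. n \<in> N \<and> s \<in> Sig}"
  then obtain n1 s1 where "q = n1 + s1*a" "n1 \<in> N" "s1 \<in> Sig" by blast
  then show "b^2 * q \<in> {n + s * a |n s. n \<in> N \<and> s \<in> Sig}"
  proof -
    have "b^2 * q = b^2 * n1 + (b^2 * s1)*a" using \<open>q = n1 + s1*a\<close> by (simp add: algebra_simps)
    then show ?thesis using sqmul[OF \<open>n1 \<in> N\<close>] Sig_sqmul[OF \<open>s1 \<in> Sig\<close>] by blast
  qed
qed

lemma maximal_qm:
  assumes "quadratic_module P" "-1 \<notin> P"
  shows "\<exists>N. quadratic_module N \<and> P \<subseteq> N \<and> -1 \<notin> N \<and>
    (\<forall>N'. quadratic_module N' \<longrightarrow> N \<subseteq> N' \<longrightarrow> -1 \<notin> N' \<longrightarrow> N' = N)"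
proof -
  define A where "A = {N. quadratic_module N \<and> P \<subseteq> N \<and> -1 \<notin> N}"
  have "\<exists>M\<in>A. \<forall>X\<in>A. M \<subseteq> X \<longrightarrow> X = M"
  proof (rule subset_Zorn_nonempty)
    have "P \<in> A" using assms unfolding A_def by simp
    then show "A \<noteq> {}" by (rule ex_in_conv[THEN iffD1, OF exI])
  next
    fix C assume ne: "C \<noteq> {}" and ch: "subset.chain A C"
    have CA: "C \<subseteq> A" using ch unfolding subset_chain_def by (rule conjunct1)
    have lin: "X \<subseteq> Y \<or> Y \<subseteq> X" if "X \<in> C" "Y \<in> C" for X Y
      using ch that unfolding subset_chain_def by blast
    have qX: "quadratic_module X" "P \<subseteq> X" "-1 \<notin> X" if "X \<in> C" for X
      using CA that unfolding A_def by auto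
    have "quadratic_module (\<Union>C)"
      unfolding quadratic_module_def
    proof (intro conjI ballI allI)
      fix p q assume "p \<in> \<Union>C" "q \<in> \<Union>C"
      then obtain X Y where XY: "X \<in> C" "Y \<in> C" "p \<in> X" "q \<in> Y" by blast
      show "p + q \<in> \<Union>C"
      proof (cases "X \<subseteq> Y")
        case True
        then have "p \<in> Y" using XY by blast
        then have "p + q \<in> Y" using qX(1)[OF XY(2)] XY(4) unfolding quadratic_module_def by blast
        then show ?thesis using XY(2) by blast
      next
        case False
        then have "Y \<subseteq> X" using lin[OF XY(1,2)] by blast
        then have "q \<in> X" using XY by blast
        then have "p + q \<in> X" using qX(1)[OF XY(1)] XY(3) unfolding quadratic_module_def by blast
        then show ?thesis using XY(1) by blast
      qed
    next
      fix a q assume "q \<in> \<Union>C"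
      then obtain X where X: "X \<in> C" "q \<in> X" by blast
      then have "a^2*q \<in> X" using qX(1)[OF X(1)] unfolding quadratic_module_def by blast
      then show "a^2*q \<in> \<Union>C" using X(1) by blast
    next
      obtain X where X: "X \<in> C" using ne by blast
      then have "1 \<in> X" using qX(1)[OF X] unfolding quadratic_module_def by blast
      then show "1 \<in> \<Union>C" using X by blast
    qed
    moreover have "P \<subseteq> \<Union>C"
    proof -
      obtain X where X: "X \<in> C" using ne by blast
      then show ?thesis using qX(2)[OF X] by blast
    qed
    moreover have "-1 \<notin> \<Union>C" using qX(3) by blast
    ultimately show "\<Union>C \<in> A" unfolding A_def by blast
  qed
  then obtain M where "M \<in> A" "\<forall>X\<in>A. M \<subseteq> X \<longrightarrow> X = M" by blast
  then show ?thesis unfolding A_def by blast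
qed

lemma semiordering:
  assumes qN: "quadratic_module N" and nN: "-1 \<notin> N"
    and maxN: "\<forall>N'. quadratic_module N' \<longrightarrow> N \<subseteq> N' \<longrightarrow> -1 \<notin> N' \<longrightarrow> N' = N"
  shows "a \<in> N \<or> -a \<in> N"
proof (rule ccontr)
  interpret qmod N by (rule qmod.intro) (rule qN)
  assume "\<not> (a \<in> N \<or> -a \<in> N)"
  then have na: "a \<notin> N" "-a \<notin> N" by auto
  have ideal: "b * p \<in> N" if "p \<in> N" "-p \<in> N" for b p
  proof -
    have gen: "\<And>h k p::'a. (h - k) * p = h * p + k * (-p)" by (simp add: algebra_simps)
    have e1: "(b+1)^2 - (b-1)^2 = of_real 4 * b"
      by (simp add: power2_eq_square algebra_simps)
    have "(of_real (1/2) * (b+1))^2 - (of_real (1/2) * (b-1))^2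
        = of_real (1/4) * ((b+1)^2 - (b-1)^2)"
    proof -
      have h: "\<And>x::'a. (of_real (1/2) * x)^2 = of_real (1/4) * x^2"
        by (simp add: power_mult_distrib flip: of_real_power) (simp add: power2_eq_square)
      show ?thesis unfolding h by (rule right_diff_distrib[symmetric])
    qed
    also have "\<dots> = b"
    proof -
      have o: "of_real (1/4) * (of_real 4 :: 'a) = 1" by (simp only: of_real_mult[symmetric]) simp
      show ?thesis unfolding e1 mult.assoc[symmetric] o by simp
    qed
    finally have hk: "(of_real (1/2) * (b+1))^2 - (of_real (1/2) * (b-1))^2 = b" .
    have "b * p = ((of_real (1/2) * (b+1))^2 - (of_real (1/2) * (b-1))^2) * p" unfolding hk ..
    also have "\<dots> = (of_real (1/2) * (b+1))^2 * p + (of_real (1/2) * (b-1))^2 * (-p)"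
      by (rule gen)
    finally have "b * p = (of_real (1/2) * (b+1))^2 * p + (of_real (1/2) * (b-1))^2 * (-p)" .
    moreover have "(of_real (1/2) * (b+1))^2 * p + (of_real (1/2) * (b-1))^2 * (-p) \<in> N"
      using that by (intro add sqmul)
    ultimately show ?thesis by simp
  qed
  have get: "\<exists>n s. n \<in> N \<and> s \<in> Sig \<and> -1 = n + s * c" if "c \<notin> N" for c
  proof -
    let ?N' = "{n + s * c | n s. n \<in> N \<and> s \<in> Sig}"
    have q': "quadratic_module ?N'" by (rule ext_qm[OF qN])
    have sub: "N \<subseteq> ?N'"
    proof
      fix n assume "n \<in> N"
      moreover have "n = n + 0^2 * c" by simp
      ultimately show "n \<in> ?N'" using Sig_sq[of 0] by blast
    qed
    have "c = 0 + 1^2 * c" by simp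
    then have "c \<in> ?N'" using zero Sig_sq[of 1] by blast
    then have "?N' \<noteq> N" using that by blast
    then have "-1 \<in> ?N'" using maxN q' sub by blast
    then show ?thesis by blast
  qed
  obtain n1 s1 where 1: "n1 \<in> N" "s1 \<in> Sig" "-1 = n1 + s1 * a" using get[OF na(1)] by blast
  obtain n2 s2 where 2: "n2 \<in> N" "s2 \<in> Sig" "-1 = n2 + s2 * (-a)" using get[OF na(2)] by blast
  have "s2 * n1 + s1 * n2 \<in> N" using 1 2 Sig_mul[OF qN] add by blast
  moreover have "s2 * n1 + s1 * n2 = -(s1 + s2)"
  proof -
    have "s2 * (-1) + s1 * (-1) = s2 * (n1 + s1 * a) + s1 * (n2 + s2 * (-a))"
      using 1(3) 2(3) by simp
    then show ?thesis by (simp add: algebra_simps)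
  qed
  ultimately have "-(s1+s2) \<in> N" by simp
  then have "-s1 \<in> N" using add[of "-(s1+s2)" s2] Sig_in[OF qN 2(2)] by simp
  moreover have "s1 \<in> N" using Sig_in[OF qN 1(2)] .
  ultimately have "a * s1 \<in> N" using ideal by blast
  then have "-1 \<in> N" using 1 add by (simp add: mult.commute)
  then show False using nN by simp
qed


lemma char_from_semiord:
  fixes N :: "'a::{comm_ring_1,real_algebra_1} set"
  assumes qN: "quadratic_module N" and nN: "-1 \<notin> N" and tot: "\<And>a. a \<in> N \<or> -a \<in> N"
    and arch: "\<And>a. \<exists>r. of_real r + a \<in> N"
  shows "\<exists>y\<in>char_space. \<forall>g\<in>N. y g \<ge> 0"
proof -
  interpret qmod N by (rule qmod.intro) (rule qN)
  define good where "good a c \<longleftrightarrow> (\<forall>\<epsilon>>0. a - of_real (c - \<epsilon>) \<in> N \<and> of_real (c + \<epsilon>) - a \<in> N)"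
    for a c
  have mono: "a - of_real s \<in> N" if "a - of_real r \<in> N" "s \<le> r" for a r s
  proof -
    have "a - of_real s = (a - of_real r) + of_real (r - s)" by (simp add: algebra_simps)
    then show ?thesis using add[OF that(1) ofr[of "r - s"]] that(2) by simp
  qed
  have bnd: "r \<le> s" if "a - of_real r \<in> N" "of_real s - a \<in> N" for a r s
  proof -
    have "(a - of_real r) + (of_real s - a) = of_real (s - r)" by (simp add: algebra_simps)
    then have "of_real (s - r) \<in> N" using add[OF that] by simp
    then show ?thesis using proper_real[OF nN] by fastforce
  qed
  have ex: "\<exists>c. good a c" for a
  proof -
    let ?A = "{r. a - of_real r \<in> N}"
    obtain r0 where r0: "of_real r0 + a \<in> N" using arch by blast
    then have "-r0 \<in> ?A" by (simp add: algebra_simps)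
    then have ne: "?A \<noteq> {}" by blast
    obtain s0 where s0: "of_real s0 + (-a) \<in> N" using arch by blast
    have bd: "bdd_above ?A"
      unfolding bdd_above_def using bnd s0 by (intro exI[of _ s0]) auto
    define c where "c = Sup ?A"
    have "good a c" unfolding good_def
    proof (intro allI impI conjI)
      fix \<epsilon> :: real assume e: "\<epsilon> > 0"
      have "c - \<epsilon> < Sup ?A" using e c_def by simp
      then obtain r where "r \<in> ?A" "c - \<epsilon> < r" using less_cSup_iff[OF ne bd] by blast
      then show "a - of_real (c - \<epsilon>) \<in> N" using mono[of a r "c - \<epsilon>"] by simp
      have "c + \<epsilon> \<notin> ?A"
      proof
        assume "c + \<epsilon> \<in> ?A"
        then have "c + \<epsilon> \<le> c" unfolding c_def using cSup_upper[OF _ bd] by blast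
        then show False using e by simp
      qed
      then have "-(a - of_real (c + \<epsilon>)) \<in> N" using tot by blast
      then show "of_real (c + \<epsilon>) - a \<in> N" by simp
    qed
    then show ?thesis by blast
  qed
  have uniq: "c = d" if "good a c" "good a d" for a c d
  proof (rule ccontr)
    have less: False if "good a c" "good a d" "c < d" for c d
    proof -
      define e where "e = (d - c)/3"
      have e: "e > 0" using that(3) by (simp add: e_def)
      have "of_real (c + e) - a \<in> N" using that(1) e unfolding good_def by blast
      moreover have "a - of_real (d - e) \<in> N" using that(2) e unfolding good_def by blast
      ultimately have "d - e \<le> c + e" using bnd by blast
      moreover have "3 * e = d - c" by (simp add: e_def)
      ultimately show False using e by linarith
    qed
    assume "c \<noteq> d"
    then show False using less[OF that] less[OF that(2,1)] by linarith
  qed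
  define y where "y a = (THE c. good a c)" for a
  have y_good: "good a (y a)" for a
    unfolding y_def using ex[of a] uniq by (metis theI)
  have y_eq: "y a = c" if "good a c" for a c
    using uniq[OF y_good that] .
  have gen1: "\<And>a b x y. (a - of_real x) + (b - of_real y) = a + b - (of_real (x + y)::'a)"
    by (simp add: algebra_simps)
  have gen2: "\<And>a b x y. (of_real x - a) + (of_real y - b) = (of_real (x + y)::'a) - (a + b)"
    by (simp add: algebra_simps)
  have good_add: "good (a + b) (c + d)" if "good a c" "good b d" for a b c d
    unfolding good_def
  proof (intro allI impI conjI)
    fix \<epsilon> :: real assume e: "\<epsilon> > 0"
    have "(a - of_real (c - \<epsilon>/2)) + (b - of_real (d - \<epsilon>/2)) \<in> N"
      using that e unfolding good_def by (intro add) auto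
    moreover have "(a - of_real (c - \<epsilon>/2)) + (b - of_real (d - \<epsilon>/2)) = a + b - of_real ((c - \<epsilon>/2) + (d - \<epsilon>/2))"
      by (rule gen1)
    moreover have "(c - \<epsilon>/2) + (d - \<epsilon>/2) = c + d - \<epsilon>" by simp
    ultimately show "a + b - of_real (c + d - \<epsilon>) \<in> N" by metis
    have "(of_real (c + \<epsilon>/2) - a) + (of_real (d + \<epsilon>/2) - b) \<in> N"
      using that e unfolding good_def by (intro add) auto
    moreover have "(of_real (c + \<epsilon>/2) - a) + (of_real (d + \<epsilon>/2) - b) = of_real ((c + \<epsilon>/2) + (d + \<epsilon>/2)) - (a + b)"
      by (rule gen2)
    moreover have "(c + \<epsilon>/2) + (d + \<epsilon>/2) = c + d + \<epsilon>" by simp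
    ultimately show "of_real (c + d + \<epsilon>) - (a + b) \<in> N" by metis
  qed
  have good_scale: "good (r *\<^sub>R a) (r * c)" if g: "good a c" for a c r
    unfolding good_def
  proof (intro allI impI)
    fix \<epsilon> :: real assume e: "\<epsilon> > 0"
    consider "r > 0" | "r = 0" | "r < 0" by linarith
    then show "r *\<^sub>R a - of_real (r * c - \<epsilon>) \<in> N \<and> of_real (r * c + \<epsilon>) - r *\<^sub>R a \<in> N"
    proof cases
      case 1
      have "r *\<^sub>R (a - of_real (c - \<epsilon>/r)) \<in> N" "r *\<^sub>R (of_real (c + \<epsilon>/r) - a) \<in> N"
        using g e 1 unfolding good_def by (auto intro!: scaleR)
      moreover have "r *\<^sub>R (a - of_real (c - \<epsilon>/r)) = r *\<^sub>R a - of_real (r * c - \<epsilon>)"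
        "r *\<^sub>R (of_real (c + \<epsilon>/r) - a) = of_real (r * c + \<epsilon>) - r *\<^sub>R a"
        using 1 by (simp_all add: scaleR_conv_of_real algebra_simps flip: of_real_mult)
      ultimately show ?thesis by simp
    next
      case 2
      then show ?thesis using e ofr by simp
    next
      case 3
      define t where "t = -r"
      have t: "t > 0" using 3 t_def by simp
      have "t *\<^sub>R (a - of_real (c - \<epsilon>/t)) \<in> N" "t *\<^sub>R (of_real (c + \<epsilon>/t) - a) \<in> N"
        using g e t unfolding good_def by (auto intro!: scaleR)
      moreover have "t *\<^sub>R (a - of_real (c - \<epsilon>/t)) = of_real (r * c + \<epsilon>) - r *\<^sub>R a"
        "t *\<^sub>R (of_real (c + \<epsilon>/t) - a) = r *\<^sub>R a - of_real (r * c - \<epsilon>)"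
        using t unfolding t_def by (simp_all add: scaleR_conv_of_real algebra_simps flip: of_real_mult)
      ultimately show ?thesis by simp
    qed
  qed
  have good_ofr: "good (of_real r) r" for r
    unfolding good_def using ofr by (auto simp: algebra_simps simp flip: of_real_diff of_real_add)
  have y_add: "y (a + b) = y a + y b" for a b by (rule y_eq[OF good_add[OF y_good y_good]])
  have y_scale: "y (r *\<^sub>R a) = r * y a" for r a by (rule y_eq[OF good_scale[OF y_good]])
  have y_ofr: "y (of_real r) = r" for r by (rule y_eq[OF good_ofr])
  have y_diff: "y (a - b) = y a - y b" for a b
    using y_add[of a "(-1) *\<^sub>R b"] y_scale[of "-1" b] by simp
  have good_sq0: "good (b^2) 0" if g: "good b 0" for b
    unfolding good_def
  proof (intro allI impI conjI)
    fix \<epsilon> :: real assume e: "\<epsilon> > 0"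
    show "b^2 - of_real (0 - \<epsilon>) \<in> N" using add[OF sq ofr[of \<epsilon>]] e by simp
    define d where "d = sqrt \<epsilon>"
    have d: "d > 0" "d^2 = \<epsilon>" using e by (simp_all add: d_def)
    have "of_real d + b \<in> N" "of_real d - b \<in> N"
      using g d(1) unfolding good_def by (auto simp: algebra_simps)
    then have "of_real (d^2) - b^2 \<in> N" using diffsq d(1) by blast
    then show "of_real (0 + \<epsilon>) - b^2 \<in> N" using d(2) by simp
  qed
  have y_sq: "y (a^2) = (y a)^2" for a
  proof -
    define c where "c = y a"
    define b where "b = a - of_real c"
    have "good b 0" using y_good[of a] unfolding good_def b_def c_def
      by (simp add: algebra_simps)
    then have yb: "y b = 0" "y (b^2) = 0" using good_sq0 y_eq by blast+
    have "a^2 = b^2 + (2*c) *\<^sub>R b + of_real (c^2)"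
      unfolding b_def by (simp add: power2_eq_square scaleR_conv_of_real algebra_simps)
    moreover have "y ((of_real c)^2) = c^2" using y_ofr[of "c^2"] by simp
    ultimately have "y (a^2) = y (b^2) + (2*c) * y b + c^2" using y_add y_scale by simp
    then show ?thesis using yb c_def by simp
  qed
  have y_mult: "y (a * b) = y a * y b" for a b
  proof -
    have "a * b = (1/4) *\<^sub>R ((a+b)^2 - (a-b)^2)"
    proof -
      have "(a+b)^2 - (a-b)^2 = 4 *\<^sub>R (a*b)"
        by (simp add: power2_eq_square algebra_simps scaleR_conv_of_real)
      then show ?thesis by simp
    qed
    then have "y (a * b) = (1/4) * ((y a + y b)^2 - (y a - y b)^2)"
      using y_scale y_diff y_sq y_add by simp
    then show ?thesis by (simp add: power2_eq_square algebra_simps)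
  qed
  have y_pos: "y g \<ge> 0" if "g \<in> N" for g
  proof (rule ccontr)
    assume "\<not> y g \<ge> 0"
    then have e: "- y g / 2 > 0" by simp
    then have "of_real (y g + - y g / 2) - g \<in> N" using y_good[of g] unfolding good_def by blast
    then have "of_real (y g + - y g / 2) \<in> N" using add[OF _ that] by fastforce
    then have "y g + - y g / 2 \<ge> 0" using proper_real[OF nN] by blast
    then show False using \<open>\<not> y g \<ge> 0\<close> by simp
  qed
  have "y \<in> char_space"
    unfolding char_space_def using y_add y_mult y_scale y_ofr[of 1] by simp
  then show ?thesis using y_pos by blast
qed


lemma of_real_split: "(a + of_real x) + (b + of_real y) = a + b + (of_real (x+y) :: 'a::real_algebra_1)"
  by (simp add: algebra_simps)

locale aqm = qmod +
  assumes arch: "archimedean_qm Q"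
begin

lemma arch_r: "\<exists>r\<ge>1. of_real r + a \<in> Q"
proof -
  obtain n :: nat where "n \<ge> 1" "of_nat n + a \<in> Q" using arch unfolding archimedean_qm_def by blast
  then show ?thesis by (intro exI[of _ "real n"]) simp
qed

lemma arch_mono: "of_real r + a \<in> Q \<Longrightarrow> r \<le> s \<Longrightarrow> of_real s + a \<in> Q"
proof -
  assume "of_real r + a \<in> Q" "r \<le> s"
  moreover have "of_real s + a = (of_real r + a) + of_real (s - r)" by (simp add: algebra_simps)
  ultimately show ?thesis using addr[of "of_real r + a" "s - r"] by (simp only:)
qed

lemma arch_both: "\<exists>r\<ge>1. of_real r + a \<in> Q \<and> of_real r - a \<in> Q"
proof -
  obtain r1 where r1: "r1 \<ge> 1" "of_real r1 + a \<in> Q" using arch_r by blast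
  obtain r2 where r2: "r2 \<ge> 1" "of_real r2 + (-a) \<in> Q" using arch_r by blast
  have "of_real (max r1 r2) + a \<in> Q" using arch_mono[OF r1(2)] by simp
  moreover have "of_real (max r1 r2) + (-a) \<in> Q" using arch_mono[OF r2(2)] by simp
  ultimately show ?thesis using r1 by (intro exI[of _ "max r1 r2"]) auto
qed

definition Qb where "Qb = {a. \<forall>\<epsilon>>0. a + of_real \<epsilon> \<in> Q}"
definition S where "S = {c. \<forall>m\<in>Q. \<forall>\<epsilon>>0. c * m + of_real \<epsilon> \<in> Q}"

lemma Q_Qb: "a \<in> Q \<Longrightarrow> a \<in> Qb"
  unfolding Qb_def using addr by auto

lemma Qb_add: assumes "a \<in> Qb" "b \<in> Qb" shows "a + b \<in> Qb"
  unfolding Qb_def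
proof (intro CollectI allI impI)
  have a: "\<forall>\<epsilon>>0. a + of_real \<epsilon> \<in> Q" and b: "\<forall>\<epsilon>>0. b + of_real \<epsilon> \<in> Q"
    using assms unfolding Qb_def by auto
  fix \<epsilon> :: real assume e: "\<epsilon> > 0"
  have "(a + of_real (\<epsilon>/2)) + (b + of_real (\<epsilon>/2)) \<in> Q" by (rule add) (use a b e in auto)
  moreover have "(a + of_real (\<epsilon>/2)) + (b + of_real (\<epsilon>/2)) = a + b + (of_real (\<epsilon>/2 + \<epsilon>/2))"
    by (simp only: of_real_split)
  moreover have "\<epsilon>/2 + \<epsilon>/2 = \<epsilon>" by simp
  ultimately show "a + b + of_real \<epsilon> \<in> Q" by metis
qed

lemma Qb_scale: "r \<ge> 0 \<Longrightarrow> a \<in> Qb \<Longrightarrow> of_real r * a \<in> Qb"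
  unfolding Qb_def
proof (intro CollectI allI impI)
  fix \<epsilon> :: real assume r: "r \<ge> 0" and a: "a \<in> {a. \<forall>\<epsilon>>0. a + of_real \<epsilon> \<in> Q}" and e: "\<epsilon> > 0"
  show "of_real r * a + of_real \<epsilon> \<in> Q"
  proof (cases "r = 0")
    case True then show ?thesis using ofr e by simp
  next
    case False
    then have r: "r > 0" using r by simp
    have "of_real r * (a + of_real (\<epsilon>/r)) \<in> Q" using a r e by (intro scal) auto
    moreover have "of_real r * (a + of_real (\<epsilon>/r)) = of_real r * a + of_real \<epsilon>"
      using r by (simp add: algebra_simps flip: of_real_mult)
    ultimately show ?thesis by simp
  qed
qed

lemma S_sq: "b^2 \<in> S"
  unfolding S_def using sqmul addr by (auto simp: mult.commute)

lemma S_zero: "0 \<in> S" using S_sq[of 0] by simp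
lemma S_one: "1 \<in> S" using S_sq[of 1] by simp

lemma S_add: "c \<in> S \<Longrightarrow> d \<in> S \<Longrightarrow> c + d \<in> S"
  unfolding S_def
proof (intro CollectI ballI allI impI)
  fix m \<epsilon> assume c: "c \<in> {c. \<forall>m\<in>Q. \<forall>\<epsilon>>0. c * m + of_real \<epsilon> \<in> Q}"
    and d: "d \<in> {c. \<forall>m\<in>Q. \<forall>\<epsilon>>0. c * m + of_real \<epsilon> \<in> Q}" and m: "m \<in> Q" and e: "(\<epsilon>::real) > 0"
  have "(c * m + of_real (\<epsilon>/2)) + (d * m + of_real (\<epsilon>/2)) \<in> Q" by (rule add) (use c d m e in auto)
  moreover have "(c * m + of_real (\<epsilon>/2)) + (d * m + of_real (\<epsilon>/2)) = (c + d) * m + of_real (\<epsilon>/2 + \<epsilon>/2)"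
    unfolding of_real_split by (simp add: algebra_simps)
  moreover have "\<epsilon>/2 + \<epsilon>/2 = \<epsilon>" by simp
  ultimately show "(c + d) * m + of_real \<epsilon> \<in> Q" by metis
qed

lemma S_sqmul: "c \<in> S \<Longrightarrow> b^2 * c \<in> S"
  unfolding S_def
proof (intro CollectI ballI allI impI)
  fix m \<epsilon> assume c: "c \<in> {c. \<forall>m\<in>Q. \<forall>\<epsilon>>0. c * m + of_real \<epsilon> \<in> Q}" and m: "m \<in> Q" and e: "(\<epsilon>::real) > 0"
  have "c * (b^2 * m) + of_real \<epsilon> \<in> Q" using c sqmul[OF m] e by blast
  then show "b^2 * c * m + of_real \<epsilon> \<in> Q" by (simp add: algebra_simps)
qed

lemma S_scale: "r \<ge> 0 \<Longrightarrow> c \<in> S \<Longrightarrow> of_real r * c \<in> S"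
  unfolding S_def
proof (intro CollectI ballI allI impI)
  fix m \<epsilon> assume r: "r \<ge> 0" and c: "c \<in> {c. \<forall>m\<in>Q. \<forall>\<epsilon>>0. c * m + of_real \<epsilon> \<in> Q}" and m: "m \<in> Q" and e: "(\<epsilon>::real) > 0"
  show "of_real r * c * m + of_real \<epsilon> \<in> Q"
  proof (cases "r = 0")
    case True then show ?thesis using ofr e by simp
  next
    case False
    then have r: "r > 0" using r by simp
    have "of_real r * (c * m + of_real (\<epsilon>/r)) \<in> Q" using c m r e by (intro scal) auto
    moreover have "of_real r * (c * m + of_real (\<epsilon>/r)) = of_real r * c * m + of_real \<epsilon>"
      using r by (simp add: algebra_simps flip: of_real_mult)
    ultimately show ?thesis by simp
  qed
qed

lemma S_ofr: "r \<ge> 0 \<Longrightarrow> of_real r \<in> S"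
  using S_scale[OF _ S_one] by simp

lemma S_Qb: "c \<in> S \<Longrightarrow> c \<in> Qb"
proof -
  assume "c \<in> S"
  then have "\<forall>\<epsilon>>0. c * 1 + of_real \<epsilon> \<in> Q" using one unfolding S_def by blast
  then show "c \<in> Qb" unfolding Qb_def by simp
qed

lemma S_mul_Qb:
  assumes c: "c \<in> S" and a: "a \<in> Qb"
  shows "c * a \<in> Qb"
  unfolding Qb_def
proof (intro CollectI allI impI)
  fix \<epsilon> :: real assume e: "\<epsilon> > 0"
  obtain k where k: "k \<ge> 1" "of_real k + (-c) \<in> Q" using arch_r by blast
  define e1 where "e1 = \<epsilon> / (2*k)"
  have e1: "e1 > 0" "e1 * k = \<epsilon>/2" using e k by (auto simp: e1_def)
  have m: "a + of_real e1 \<in> Q" using a e1 unfolding Qb_def by blast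
  have "c * (a + of_real e1) + of_real (\<epsilon>/2) \<in> Q" using c m e unfolding S_def by simp
  moreover have "of_real e1 * (of_real k + (-c)) \<in> Q" using k e1 by (intro scal) auto
  ultimately have "(c * (a + of_real e1) + of_real (\<epsilon>/2)) + of_real e1 * (of_real k + (-c)) \<in> Q"
    using add by blast
  moreover have "(c * (a + of_real e1) + of_real (\<epsilon>/2)) + of_real e1 * (of_real k + (-c))
      = c * a + of_real (\<epsilon>/2 + e1 * k)"
    by (simp add: algebra_simps del: of_real_add of_real_mult) (simp add: of_real_add of_real_mult)
  ultimately show "c * a + of_real \<epsilon> \<in> Q" using e1 by simp
qed

lemma Qb_sqmul: "a \<in> Qb \<Longrightarrow> b^2 * a \<in> Qb"
  using S_mul_Qb[OF S_sq] .

lemma half_id: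
  "(z::'a) - of_real (c/2) * ((1 - y^2)*m) = (z - of_real c * ((1 - y)*m)) + of_real (c/2) * ((1 - y)^2 * m)"
proof -
  have "(of_real c :: 'a) = of_real (2 * (c/2))" by simp
  also have "\<dots> = of_real 2 * of_real (c/2)" by (rule of_real_mult)
  also have "(of_real 2 :: 'a) = 2" by simp
  finally have hc: "(of_real c :: 'a) = 2 * of_real (c/2)" .
  show ?thesis unfolding hc by (simp add: algebra_simps power2_eq_square)
qed

lemma one_plus_S:
  assumes p: "1 + x \<in> Q" and n: "1 - x \<in> Q"
  shows "1 + x \<in> S"
  unfolding S_def
proof (intro CollectI ballI allI impI)
  fix m and \<epsilon> :: real assume m: "m \<in> Q" and e: "\<epsilon> > 0"
  define yy where "yy k = ((\<lambda>z. z^2)^^k) (-x)" for k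
  have yy0: "yy 0 = -x" by (simp add: yy_def)
  have yyS: "yy (Suc k) = (yy k)^2" for k by (simp add: yy_def)
  have B: "1 - yy k \<in> Q \<and> 1 + yy k \<in> Q" for k
  proof (induction k)
    case 0 then show ?case using p n yy0 by simp
  next
    case (Suc k)
    have "of_real 1 + yy k \<in> Q" "of_real 1 - yy k \<in> Q" using Suc by simp_all
    then have "of_real (1^2) - (yy k)^2 \<in> Q" by (intro diffsq) auto
    then have "1 - yy (Suc k) \<in> Q" using yyS by simp
    moreover have "1 + yy (Suc k) \<in> Q" using yyS add[OF one sq] by simp
    ultimately show ?case by blast
  qed
  have C: "(1+x)*m - of_real ((1/2)^K) * ((1 - yy K) * m) \<in> Q" for K
  proof (induction K)
    case 0 then show ?case using zero yy0 by simp
  next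
    case (Suc K)
    have "(1+x)*m - of_real ((1/2)^K/2) * ((1 - (yy K)^2)*m)
       = ((1+x)*m - of_real ((1/2)^K) * ((1 - yy K)*m)) + of_real ((1/2)^K/2) * ((1 - yy K)^2 * m)"
      by (rule half_id)
    moreover have "of_real ((1/2)^K/2) * ((1 - yy K)^2 * m) \<in> Q"
      using m by (intro scal sqmul) auto
    ultimately have "(1+x)*m - of_real ((1/2)^K/2) * ((1 - (yy K)^2)*m) \<in> Q"
      using Suc add by metis
    moreover have "(1/2::real)^Suc K = (1/2)^K/2" by simp
    ultimately show ?case using yyS by metis
  qed
  obtain lam where lam: "lam \<ge> 1" "of_real lam + (-m) \<in> Q" using arch_r by blast
  obtain K' where K': "(1/2::real)^K' < \<epsilon>/lam" using real_arch_pow_inv[of "\<epsilon>/lam" "1/2"] e lam by auto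
  define c where "c = (1/2::real)^(Suc K')"
  have c: "c \<ge> 0" "c * lam < \<epsilon>"
  proof -
    show "c \<ge> 0" by (simp add: c_def)
    have "c \<le> (1/2)^K'" by (simp add: c_def)
    then have "c < \<epsilon>/lam" using K' by linarith
    then show "c * lam < \<epsilon>" using lam by (simp add: field_simps)
  qed
  define z where "z = yy K'"
  have E: "(1+x)*m - of_real c * ((1 - z^2) * m) \<in> Q" using C[of "Suc K'"] yyS by (simp add: c_def z_def)
  have t1: "of_real c * m \<in> Q" using c m by (intro scal) auto
  have t2: "of_real c * (z^2 * (of_real lam + (-m))) \<in> Q" using c lam by (intro scal sqmul) auto
  have t3: "of_real (c*lam) * (1 - z^2) \<in> Q"
  proof -
    have "1 - z^2 \<in> Q" using B[of "Suc K'"] yyS by (simp add: z_def)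
    then show ?thesis using c lam by (intro scal) auto
  qed
  have t4: "of_real (\<epsilon> - c*lam) \<in> Q" using c by (intro ofr) auto
  have "((1+x)*m - of_real c * ((1 - z^2) * m)) + of_real c * m + of_real c * (z^2 * (of_real lam + (-m)))
      + of_real (c*lam) * (1 - z^2) + of_real (\<epsilon> - c*lam) \<in> Q"
    using E t1 t2 t3 t4 add by meson
  moreover have "((1+x)*m - of_real c * ((1 - z^2) * m)) + of_real c * m + of_real c * (z^2 * (of_real lam + (-m)))
      + of_real (c*lam) * (1 - z^2) + of_real (\<epsilon> - c*lam) = (1 + x) * m + of_real \<epsilon>"
    by (simp add: algebra_simps)
  ultimately show "(1 + x) * m + of_real \<epsilon> \<in> Q" by metis
qed

lemma S_arch: "\<exists>r. of_real r + a \<in> S"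
proof -
  obtain r where r: "r \<ge> 1" "of_real r + a \<in> Q" "of_real r - a \<in> Q" using arch_both by blast
  define x where "x = of_real (1/r) * a"
  have "of_real (1/r) * (of_real r + a) \<in> Q" "of_real (1/r) * (of_real r - a) \<in> Q"
    using r by (auto intro!: scal)
  moreover have "of_real (1/r) * (of_real r + a) = 1 + x" "of_real (1/r) * (of_real r - a) = 1 - x"
    using r by (simp_all add: x_def algebra_simps flip: of_real_mult)
  ultimately have "1 + x \<in> S" using one_plus_S by simp
  then have "of_real r * (1 + x) \<in> S" using r by (intro S_scale) auto
  moreover have "of_real r * (1 + x) = of_real r + a"
    using r by (simp add: x_def algebra_simps flip: of_real_mult)
  ultimately show ?thesis by auto
qed

lemma key:
  assumes s: "s \<in> S" and q: "q \<in> Qb" and eq: "s * f = 1 + q"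
  shows "f \<in> Q"
proof (rule ccontr)
  assume nf: "f \<notin> Q"
  obtain r0 where r0: "of_real r0 + (-s) \<in> S" using S_arch by blast
  define k where "k = max r0 1"
  have k: "k \<ge> 1" by (simp add: k_def)
  have ks: "of_real k - s \<in> S"
  proof -
    have "(of_real r0 + (-s)) + of_real (k - r0) \<in> S"
      using S_add[OF r0 S_ofr[of "k - r0"]] by (simp add: k_def)
    then show ?thesis by (simp add: algebra_simps)
  qed
  have step: "f + of_real (t - 1/k) \<in> Qb" if t: "t \<ge> 0" "f + of_real t \<in> Qb" for t
  proof -
    have "(of_real k - s) * (f + of_real t) \<in> Qb" using S_mul_Qb[OF ks t(2)] .
    moreover have "of_real t * s \<in> Qb" using S_Qb[OF S_scale[OF t(1) s]] .
    ultimately have "(of_real k - s) * (f + of_real t) + q + of_real t * s \<in> Qb"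
      using q Qb_add by blast
    moreover have "(of_real k - s) * (f + of_real t) + q + of_real t * s = of_real k * (f + of_real (t - 1/k))"
    proof -
      have "(of_real k - s) * (f + of_real t) + q + of_real t * s = of_real k * f + of_real k * of_real t - s * f + q"
        by (simp add: algebra_simps)
      also have "\<dots> = of_real k * f + of_real (k * t - 1)" using eq by (simp add: algebra_simps)
      also have "\<dots> = of_real k * (f + of_real (t - 1/k))"
        using k by (simp add: algebra_simps flip: of_real_mult)
      finally show ?thesis .
    qed
    ultimately have kk: "of_real k * (f + of_real (t - 1/k)) \<in> Qb" by simp
    have "of_real (1/k) * (of_real k * (f + of_real (t - 1/k))) \<in> Qb"
      by (rule Qb_scale[OF _ kk]) (use k in simp)
    moreover have inv: "\<And>Y. of_real (1/k) * (of_real k * Y) = (Y::'a)"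
      using k by (simp add: mult.assoc[symmetric] flip: of_real_mult)
    ultimately show ?thesis by metis
  qed
  have big: "t \<ge> 1/k" if t: "t \<ge> 0" "f + of_real t \<in> Qb" for t
  proof (rule ccontr)
    assume "\<not> t \<ge> 1/k"
    then have "1/k - t > 0" by simp
    then have "(f + of_real (t - 1/k)) + of_real (1/k - t) \<in> Q"
      using step[OF t] unfolding Qb_def by blast
    then have "f \<in> Q" by (simp add: algebra_simps)
    then show False using nf by simp
  qed
  obtain n where n: "n \<ge> 1" "of_real n + f \<in> Q" using arch_r by blast
  have ind: "n - j/k \<ge> 0 \<and> f + of_real (n - j/k) \<in> Qb" for j :: nat
  proof (induction j)
    case 0 then show ?case using n Q_Qb by (simp add: add.commute)
  next
    case (Suc j)
    then have h: "n - j/k \<ge> 1/k" using big by blast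
    have "f + of_real (n - j/k - 1/k) \<in> Qb" using step Suc by blast
    moreover have "n - j/k - 1/k = n - (Suc j)/k" by (simp add: add_divide_distrib)
    moreover have "n - (Suc j)/k \<ge> 0" using h \<open>n - j/k - 1/k = n - (Suc j)/k\<close> by linarith
    ultimately show ?case by simp
  qed
  obtain j :: nat where j: "n * k < j" using reals_Archimedean2 by blast
  have "n - j/k < 0" using j k by (simp add: field_simps)
  then show False using ind[of j] by linarith
qed

end

lemma jacobi:
  fixes Q :: "'a::{comm_ring_1,real_algebra_1} set"
  assumes qm: "quadratic_module Q" and ar: "archimedean_qm Q"
  shows "f \<in> Q \<or> (\<exists>y\<in>K_Y Q. y f \<le> 0)"
proof -
  interpret aqm Q by (intro aqm.intro qmod.intro aqm_axioms.intro qm ar)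
  define P where "P = {q - s * f | q s. q \<in> Qb \<and> s \<in> S}"
  have qP: "quadratic_module P"
    unfolding quadratic_module_def
  proof (intro conjI ballI allI)
    fix p1 p2 assume "p1 \<in> P" "p2 \<in> P"
    then obtain q1 s1 q2 s2 where h: "p1 = q1 - s1 * f" "p2 = q2 - s2 * f" "q1 \<in> Qb" "q2 \<in> Qb" "s1 \<in> S" "s2 \<in> S"
      unfolding P_def by blast
    have "p1 + p2 = (q1 + q2) - (s1 + s2) * f" unfolding h(1,2) by (simp add: algebra_simps)
    moreover have "q1 + q2 \<in> Qb" "s1 + s2 \<in> S" using h Qb_add S_add by auto
    ultimately show "p1 + p2 \<in> P" unfolding P_def by blast
  next
    fix a p assume "p \<in> P"
    then obtain q s where h: "p = q - s * f" "q \<in> Qb" "s \<in> S" unfolding P_def by blast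
    have "a^2 * p = a^2 * q - (a^2 * s) * f" unfolding h(1) by (simp add: algebra_simps)
    moreover have "a^2 * q \<in> Qb" "a^2 * s \<in> S" using h Qb_sqmul S_sqmul by auto
    ultimately show "a^2 * p \<in> P" unfolding P_def by blast
  next
    have "(1::'a) = 1 - 0 * f" by simp
    then show "1 \<in> P" unfolding P_def using Q_Qb[OF one] S_zero by blast
  qed
  have QP: "Q \<subseteq> P"
  proof
    fix q assume "q \<in> Q"
    moreover have "q = q - 0 * f" by simp
    ultimately show "q \<in> P" unfolding P_def using Q_Qb S_zero by blast
  qed
  have mfP: "-f \<in> P"
  proof -
    have "-f = 0 - 1 * f" by simp
    then show ?thesis unfolding P_def using Q_Qb[OF zero] S_one by blast
  qed
  show ?thesis
  proof (cases "-1 \<in> P")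
    case True
    then obtain q s where h: "-1 = q - s * f" "q \<in> Qb" "s \<in> S" unfolding P_def by blast
    have "q = (q - s * f) + s * f" by simp
    then have "q = -1 + s * f" unfolding h(1)[symmetric] .
    then have "s * f = 1 + q" by simp
    then have "f \<in> Q" using key h by blast
    then show ?thesis by blast
  next
    case False
    obtain N where N: "quadratic_module N" "P \<subseteq> N" "-1 \<notin> N"
      "\<forall>N'. quadratic_module N' \<longrightarrow> N \<subseteq> N' \<longrightarrow> -1 \<notin> N' \<longrightarrow> N' = N"
      using maximal_qm[OF qP False] by blast
    have tot: "a \<in> N \<or> -a \<in> N" for a using semiordering[OF N(1,3,4)] .
    have archN: "\<exists>r. of_real r + a \<in> N" for a
    proof -
      obtain r where "r \<ge> 1" "of_real r + a \<in> Q" using arch_r by blast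
      then have "of_real r + a \<in> N" using QP N(2) by (meson subsetD)
      then show ?thesis by blast
    qed
    obtain y where y: "y \<in> char_space" "\<forall>g\<in>N. y g \<ge> 0"
      using char_from_semiord[OF N(1,3) tot archN] by blast
    have "-f \<in> N" using mfP N(2) by (meson subsetD)
    then have "y (-f) \<ge> 0" using y(2) by blast
    moreover have "y ((-1) *\<^sub>R f) = (-1) * y f"
      using y(1) unfolding char_space_def by blast
    then have "y (-f) = - y f" by simp
    ultimately have "y f \<le> 0" by simp
    moreover have "y \<in> K_Y Q"
    proof -
      have "\<forall>g\<in>Q. y g \<ge> 0" using y(2) QP N(2) by (meson subsetD)
      then show ?thesis unfolding K_Y_def using y(1) by blast
    qed
    ultimately show ?thesis by blast
  qed
qed

theorem theorem1p1:
  fixes X :: "'x set" and bar :: "'a::{comm_ring_1,real_algebra_1} \<Rightarrow> 'x \<Rightarrow> real"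
    and Q :: "'a set"
  assumes "alg_hom_to_funs X bar"
    and "quadratic_module Q" and "archimedean_qm Q"
  shows "(evmap bar ` K_X Q X bar = K_Y Q \<longrightarrow>
            (\<forall>f. (\<forall>x\<in>K_X Q X bar. bar f x > 0) \<longrightarrow> f \<in> Q))
       \<and> ((top_of_set char_space) closure_of (evmap bar ` K_X Q X bar) = K_Y Q \<longrightarrow>
            (\<forall>f. (\<forall>x\<in>K_X Q X bar. bar f x \<ge> 0) \<longrightarrow> (\<forall>\<epsilon>::real. \<epsilon> > 0 \<longrightarrow> f + of_real \<epsilon> \<in> Q)))"
proof (intro conjI impI allI)
  fix f assume eq: "evmap bar ` K_X Q X bar = K_Y Q" and pos: "\<forall>x\<in>K_X Q X bar. bar f x > 0"
  show "f \<in> Q"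
  proof (rule ccontr)
    assume "f \<notin> Q"
    then obtain y where y: "y \<in> K_Y Q" "y f \<le> 0" using jacobi[OF assms(2,3), of f] by blast
    then obtain x where "x \<in> K_X Q X bar" "y = evmap bar x" using eq by (metis imageE)
    then show False using pos y by (auto simp: evmap_def)
  qed
next
  fix f and \<epsilon> :: real
  assume eq: "(top_of_set char_space) closure_of (evmap bar ` K_X Q X bar) = K_Y Q"
    and pos: "\<forall>x\<in>K_X Q X bar. bar f x \<ge> 0" and e: "\<epsilon> > 0"
  show "f + of_real \<epsilon> \<in> Q"
  proof (rule ccontr)
    assume "f + of_real \<epsilon> \<notin> Q"
    then obtain y where y: "y \<in> K_Y Q" "y (f + of_real \<epsilon>) \<le> 0" using jacobi[OF assms(2,3), of "f + of_real \<epsilon>"] by blast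
    have ych: "y \<in> char_space" using y by (auto simp: K_Y_def)
    have "y (f + of_real \<epsilon>) = y f + \<epsilon>"
      using ych by (simp add: char_space_def of_real_def)
    with y have yf: "y f < 0" using e by simp
    have cl: "closedin (top_of_set char_space) ({z. z f \<ge> 0} \<inter> char_space)"
      unfolding closedin_subtopology
      by (intro exI[of _ "{z. z f \<ge> 0}"] conjI)
         (auto intro!: closed_Collect_le continuous_on_product_coordinates)
    have sub: "evmap bar ` K_X Q X bar \<subseteq> {z. z f \<ge> 0} \<inter> char_space"
      using pos assms(1) by (auto simp: evmap_def K_X_def char_space_def alg_hom_to_funs_def)
    have "y \<in> {z. z f \<ge> 0}" using closure_of_minimal[OF sub cl] eq y(1) by blast
    then show False using yf by simp
  qed
qed

end
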